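(* Consider the causal directed acyclic graph $G_a$ on the variables $X, D, S, Y, K_D, K_S$ whose edges are exactly $X \to D$, $D \to Y$, $X \to S$, $S \to Y$, $K_D \to X$, $K_D \to Y$, $K_S \to X$, $K_S \to Y$, and suppose that only $X$, $D$ and $Y$ are observed (i.e. $S$, $K_D$, $K_S$ are unobserved). Then the interventional distribution $P(y \mid do(x))$ is not identifiable from the joint distribution of the observed variables $(X, D, Y)$.
   Context: A causal model over a DAG: each variable is generated from its parents in the graph and independent exogenous noise; $P(y \mid do(x))$ denotes the distribution of $Y$ after setting $X = x$ by intervention (removing all edges into $X$). "Identifiable" means that $P(y\mid do(x))$ is uniquely determined by the joint distribution of the observed variables for every causal model compatible with the graph (with strictly positive observational distribution). Interpretation in the paper: $X$ is a blurry image, $D$ a pixel-level feature, $S$ a semantic-level feature, $Y$ the restored image, and $K_D$, $K_S$ the complete pixel-level and semantic-level knowledge contained in $X$. *)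

theory Defs
  imports "HOL-Probability.Probability_Mass_Function"
begin

text \<open>Each variable is a function of its parents in G_a and of its own exogenous noise;
  the six noises are mutually independent with distributions given by pmfs.\<close>

record ('x, 'd, 's, 'y, 'kd, 'ks, 'u) ga_scm =
  noise_KD :: "'u pmf"
  noise_KS :: "'u pmf"
  noise_X  :: "'u pmf"
  noise_D  :: "'u pmf"
  noise_S  :: "'u pmf"
  noise_Y  :: "'u pmf"
  f_KD :: "'u \<Rightarrow> 'kd"
  f_KS :: "'u \<Rightarrow> 'ks"
  f_X  :: "'kd \<Rightarrow> 'ks \<Rightarrow> 'u \<Rightarrow> 'x"
  f_D  :: "'x \<Rightarrow> 'u \<Rightarrow> 'd"
  f_S  :: "'x \<Rightarrow> 'u \<Rightarrow> 's"
  f_Y  :: "'d \<Rightarrow> 's \<Rightarrow> 'kd \<Rightarrow> 'ks \<Rightarrow> 'u \<Rightarrow> 'y"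

text \<open>With iv = None this is the observational
  model; with iv = Some x0 it is the model after the intervention do(X = x0), i.e. the
  mechanism of X is replaced by the constant x0 (all edges into X removed).\<close>
definition ga_joint ::
  "('x, 'd, 's, 'y, 'kd, 'ks, 'u) ga_scm \<Rightarrow> 'x option \<Rightarrow> ('x \<times> 'd \<times> 's \<times> 'y \<times> 'kd \<times> 'ks) pmf" where
  "ga_joint M iv =
     do { ukd \<leftarrow> noise_KD M; uks \<leftarrow> noise_KS M; ux \<leftarrow> noise_X M;
          ud \<leftarrow> noise_D M; us \<leftarrow> noise_S M; uy \<leftarrow> noise_Y M;
          let kd = f_KD M ukd; let ks = f_KS M uks;
          let x = (case iv of None \<Rightarrow> f_X M kd ks ux | Some x0 \<Rightarrow> x0);
          let d = f_D M x ud; let s = f_S M x us;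
          let y = f_Y M d s kd ks uy;
          return_pmf (x, d, s, y, kd, ks) }"

definition ga_obs :: "('x, 'd, 's, 'y, 'kd, 'ks, 'u) ga_scm \<Rightarrow> ('x \<times> 'd \<times> 'y) pmf" where
  "ga_obs M = map_pmf (\<lambda>(x, d, s, y, kd, ks). (x, d, y)) (ga_joint M None)"

definition ga_do :: "('x, 'd, 's, 'y, 'kd, 'ks, 'u) ga_scm \<Rightarrow> 'x \<Rightarrow> 'y \<Rightarrow> real" where
  "ga_do M x y = pmf (map_pmf (\<lambda>(x, d, s, y, kd, ks). y) (ga_joint M (Some x))) y"

definition ga_identifiable_in :: "('x, 'd, 's, 'y, 'kd, 'ks, 'u) ga_scm set \<Rightarrow> bool" where
  "ga_identifiable_in C \<longleftrightarrow>
     (\<forall>M1\<in>C. \<forall>M2\<in>C.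
        (\<forall>v. pmf (ga_obs M1) v > 0) \<and> ga_obs M1 = ga_obs M2 \<longrightarrow>
        (\<forall>x y. ga_do M1 x y = ga_do M2 x y))"

end

theory Submission
  imports Defs
begin

definition coin :: "nat pmf" where "coin = pmf_of_set {0,1}"

definition M1 :: "(bool, bool, bool, bool, bool, bool, nat) ga_scm" where
 "M1 = \<lparr> noise_KD = coin, noise_KS = coin, noise_X = coin, noise_D = coin, noise_S = coin,
   noise_Y = coin, f_KD = (\<lambda>u. u = 0), f_KS = (\<lambda>u. u = 0), f_X = (\<lambda>kd ks u. kd),
   f_D = (\<lambda>x u. u = 0), f_S = (\<lambda>x u. x),
   f_Y = (\<lambda>d s kd ks u. if s = kd then u = 0 else True) \<rparr>"

definition M2 :: "(bool, bool, bool, bool, bool, bool, nat) ga_scm" where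
 "M2 = \<lparr> noise_KD = coin, noise_KS = coin, noise_X = coin, noise_D = coin, noise_S = coin,
   noise_Y = coin, f_KD = (\<lambda>u. u = 0), f_KS = (\<lambda>u. u = 0), f_X = (\<lambda>kd ks u. u = 0),
   f_D = (\<lambda>x u. u = 0), f_S = (\<lambda>x u. x),
   f_Y = (\<lambda>d s kd ks u. u = 0) \<rparr>"

lemma obs1: "ga_obs M1 = bind_pmf coin (\<lambda>a. bind_pmf coin (\<lambda>b. bind_pmf coin (\<lambda>c. return_pmf (a = 0, b = 0, c = 0))))"
  unfolding ga_obs_def ga_joint_def M1_def
  by (simp add: map_bind_pmf bind_pmf_const Let_def)

lemma obs2: "ga_obs M2 = bind_pmf coin (\<lambda>a. bind_pmf coin (\<lambda>b. bind_pmf coin (\<lambda>c. return_pmf (a = 0, b = 0, c = 0))))"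
  unfolding ga_obs_def ga_joint_def M2_def
  by (simp add: map_bind_pmf bind_pmf_const Let_def)

lemma pos: "pmf (ga_obs M1) v > 0"
proof -
  obtain a b c where v: "v = (a,b,c)" by (cases v) auto
  have sc: "set_pmf coin = {0,1}" by (simp add: coin_def)
  let ?f = "\<lambda>x::bool. if x then 0::nat else 1"
  have "v \<in> set_pmf (ga_obs M1)"
    unfolding obs1 set_bind_pmf set_return_pmf sc v
    apply (rule UN_I[of "?f a"], simp)
    apply (rule UN_I[of "?f b"], simp)
    apply (rule UN_I[of "?f c"], simp)
    by simp
  thus ?thesis by (simp add: pmf_positive_iff)
qed

lemma do1: "ga_do M1 True True = 3/4"
  unfolding ga_do_def ga_joint_def M1_def coin_def
  by (simp add: map_bind_pmf bind_pmf_const Let_def pmf_bind integral_pmf_of_set)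

lemma do2: "ga_do M2 True True = 1/2"
  unfolding ga_do_def ga_joint_def M2_def
  apply (simp only: ga_scm.simps Let_def option.case map_bind_pmf map_return_pmf prod.case)
  apply (simp only: bind_pmf_const)
  apply (simp add: coin_def pmf_bind integral_pmf_of_set)
  done

theorem mainTheorem1:
  shows "\<not> ga_identifiable_in (UNIV :: (bool, bool, bool, bool, bool, bool, nat) ga_scm set)"
proof
  assume "ga_identifiable_in (UNIV :: (bool, bool, bool, bool, bool, bool, nat) ga_scm set)"
  moreover have "(\<forall>v. pmf (ga_obs M1) v > 0) \<and> ga_obs M1 = ga_obs M2"
    using pos obs1 obs2 by simp
  ultimately have "ga_do M1 True True = ga_do M2 True True"
    unfolding ga_identifiable_in_def by blast
  thus False unfolding do1 do2 by simp
qed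

end
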